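(* Let $R$ be a finite commutative ring and let $C\subseteq R^n$ be a (not necessarily linear) code with $|C|\ge 2$, locality $r\ge 1$, minimum distance $d$, and let $\kappa$ be the minimum size of an information set of $C$. Then $$d\le n-\kappa-\left\lceil\frac{\kappa}{r}\right\rceil+2 \qquad\text{and}\qquad \frac{\kappa}{n}\le\frac{r}{r+1}.$$
   Context: For $S\subseteq\{1,\dots,n\}$, $C_S$ denotes the punctured code obtained by keeping only the coordinates in $S$. $S$ is an information set if $|C_S|=|C|$; $\kappa$ is the minimum cardinality of an information set. A coordinate $i$ has locality $r$ if there is $S_i\subseteq\{1,\dots,n\}\setminus\{i\}$ with $|S_i|\le r$ and $|C_{S_i}|=|C_{S_i\cup\{i\}}|$ (a recovering set for $i$). $C$ has locality $r$ if every coordinate has locality $r$. $d$ is the minimum Hamming distance between distinct codewords. *)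

theory Defs
  imports Complex_Main "HOL-Library.FuncSet"
begin

definition words :: "nat \<Rightarrow> (nat \<Rightarrow> 'a) set" where
  "words n = PiE {1..n} (\<lambda>_. UNIV)"

definition punct :: "(nat \<Rightarrow> 'a) set \<Rightarrow> nat set \<Rightarrow> (nat \<Rightarrow> 'a) set" where
  "punct C S = (\<lambda>c. restrict c S) ` C"

definition info_set :: "nat \<Rightarrow> (nat \<Rightarrow> 'a) set \<Rightarrow> nat set \<Rightarrow> bool" where
  "info_set n C S \<longleftrightarrow> S \<subseteq> {1..n} \<and> card (punct C S) = card C"

definition kappa :: "nat \<Rightarrow> (nat \<Rightarrow> 'a) set \<Rightarrow> nat" where
  "kappa n C = (LEAST k. \<exists>S. info_set n C S \<and> card S = k)"

definition recovering_set :: "nat \<Rightarrow> (nat \<Rightarrow> 'a) set \<Rightarrow> nat \<Rightarrow> nat set \<Rightarrow> bool" where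
  "recovering_set n C i Si \<longleftrightarrow> Si \<subseteq> {1..n} - {i} \<and> card (punct C Si) = card (punct C (insert i Si))"

definition coord_locality :: "nat \<Rightarrow> (nat \<Rightarrow> 'a) set \<Rightarrow> nat \<Rightarrow> nat \<Rightarrow> bool" where
  "coord_locality n C r i \<longleftrightarrow> (\<exists>Si. recovering_set n C i Si \<and> card Si \<le> r)"

definition has_locality :: "nat \<Rightarrow> (nat \<Rightarrow> 'a) set \<Rightarrow> nat \<Rightarrow> bool" where
  "has_locality n C r \<longleftrightarrow> (\<forall>i\<in>{1..n}. coord_locality n C r i)"

definition hamming :: "nat \<Rightarrow> (nat \<Rightarrow> 'a) \<Rightarrow> (nat \<Rightarrow> 'a) \<Rightarrow> nat" where
  "hamming n x y = card {i\<in>{1..n}. x i \<noteq> y i}"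

definition min_dist :: "nat \<Rightarrow> (nat \<Rightarrow> 'a) set \<Rightarrow> nat" where
  "min_dist n C = Min {hamming n x y | x y. x \<in> C \<and> y \<in> C \<and> x \<noteq> y}"

end

theory Submission
  imports Defs
begin

definition detm :: "(nat \<Rightarrow> 'a) set \<Rightarrow> nat set \<Rightarrow> nat set \<Rightarrow> bool" where
  "detm C A S \<longleftrightarrow> (\<forall>c\<in>C. \<forall>c'\<in>C. (\<forall>j\<in>A. c j = c' j) \<longrightarrow> (\<forall>j\<in>S. c j = c' j))"

definition inv2 :: "nat \<Rightarrow> (nat \<Rightarrow> 'a) set \<Rightarrow> nat set \<Rightarrow> nat set \<Rightarrow> nat \<Rightarrow> bool" where
  "inv2 n C A S t \<longleftrightarrow> A \<subseteq> S \<and> S \<subseteq> {1..n} \<and> detm C A S \<and> card S = card A + t"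

lemma words_finite: "finite (words n :: (nat \<Rightarrow> 'a::finite) set)"
  unfolding words_def by (intro finite_PiE) auto

lemma rec_det:
  assumes fin: "finite C" and rs: "recovering_set n C i R"
  shows "detm C R {i}"
  unfolding detm_def
proof (intro ballI impI)
  fix c c' j assume c: "c \<in> C" and c': "c' \<in> C" and ag: "\<forall>j\<in>R. c j = c' j" and j: "j \<in> {i}"
  have eq: "punct C R = (\<lambda>x. restrict x R) ` punct C (insert i R)"
    unfolding punct_def image_image by (rule image_cong) (auto simp: restrict_def fun_eq_iff)
  have "card ((\<lambda>x. restrict x R) ` punct C (insert i R)) = card (punct C (insert i R))"
    using rs eq unfolding recovering_set_def by simp
  hence inj: "inj_on (\<lambda>x. restrict x R) (punct C (insert i R))"
    using eq_card_imp_inj_on fin unfolding punct_def by (metis finite_imageI)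
  have "restrict (restrict c (insert i R)) R = restrict (restrict c' (insert i R)) R"
    using ag by (auto simp: restrict_def fun_eq_iff)
  hence "restrict c (insert i R) = restrict c' (insert i R)"
    using inj c c' unfolding punct_def inj_on_def by blast
  then show "c j = c' j" using j by (metis insertI1 restrict_apply' singletonD)
qed

lemma words_eq:
  assumes "c \<in> words n" "c' \<in> words n" "\<forall>j\<in>{1..n}. c j = c' j"
  shows "c = c'"
  using assms unfolding words_def by (metis PiE_ext)

lemma info_full:
  assumes "C \<subseteq> words n"
  shows "info_set n C {1..n}"
proof -
  have "punct C {1..n} = C" unfolding punct_def
  proof (rule trans[OF image_cong[OF refl] image_ident])
    fix c assume "c \<in> C" then have "c \<in> words n" using assms by auto
    then show "restrict c {1..n} = c" unfolding words_def
      by (simp add: PiE_iff extensional_restrict)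
  qed
  then show ?thesis unfolding info_set_def by simp
qed

lemma kappa_le:
  assumes "info_set n C A"
  shows "kappa n C \<le> card A"
  unfolding kappa_def by (rule Least_le) (use assms in auto)

lemma det_full_kappa:
  assumes sub: "C \<subseteq> words n" and A: "A \<subseteq> {1..n}" and d: "detm C A {1..n}"
  shows "kappa n C \<le> card A"
proof -
  have "inj_on (\<lambda>c. restrict c A) C"
  proof (rule inj_onI)
    fix c c' assume c: "c \<in> C" and c': "c' \<in> C" and e: "restrict c A = restrict c' A"
    have "\<forall>j\<in>A. c j = c' j" using e by (metis restrict_apply')
    hence "\<forall>j\<in>{1..n}. c j = c' j" using d c c' unfolding detm_def by blast
    then show "c = c'" using words_eq sub c c' by blast
  qed
  hence "card (punct C A) = card C" unfolding punct_def by (rule card_image)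
  then show ?thesis using A by (intro kappa_le) (simp add: info_set_def)
qed

lemma small_nondet:
  assumes A: "A \<subseteq> {1..n}" and k: "card A < kappa n C" and fin: "finite C"
  shows "\<exists>c\<in>C. \<exists>c'\<in>C. c \<noteq> c' \<and> (\<forall>j\<in>A. c j = c' j)"
proof (rule ccontr)
  assume "\<not> ?thesis"
  hence "inj_on (\<lambda>c. restrict c A) C"
    by (auto simp: inj_on_def fun_eq_iff restrict_def)
  hence "card (punct C A) = card C" unfolding punct_def by (rule card_image)
  hence "kappa n C \<le> card A" using A by (intro kappa_le) (simp add: info_set_def)
  then show False using k by simp
qed

lemma kappa_pos:
  assumes sub: "C \<subseteq> words n" and c2: "card C \<ge> 2"
  shows "kappa n C \<ge> 1"
proof (rule ccontr)
  assume "\<not> ?thesis" hence k0: "kappa n C = 0" by simp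
  have "\<exists>S. info_set n C S \<and> card S = kappa n C"
    unfolding kappa_def by (rule LeastI_ex) (use info_full[OF sub] in auto)
  then obtain S where S: "info_set n C S" "card S = 0" using k0 by auto
  have "finite S" using S(1) unfolding info_set_def by (meson finite_atLeastAtMost finite_subset)
  hence "S = {}" using S by simp
  moreover have "C \<noteq> {}" using c2 by auto
  hence "punct C {} = {\<lambda>_. undefined}" unfolding punct_def by (auto simp: restrict_def)
  ultimately show False using S(1) c2 unfolding info_set_def by simp
qed

lemma step:
  assumes inv: "inv2 n C A S t" and cr: "card A \<le> t * r" and ne: "S \<noteq> {1..n}"
    and loc: "has_locality n C r" and fin: "finite C"
  shows "\<exists>A' S'. inv2 n C A' S' (t+1) \<and> card A' \<le> (t+1) * r \<and> card S < card S'"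
proof -
  from inv have AS: "A \<subseteq> S" and Sn: "S \<subseteq> {1..n}" and dt: "detm C A S"
    and cs: "card S = card A + t" unfolding inv2_def by auto
  obtain i where i: "i \<in> {1..n}" "i \<notin> S" using ne Sn by blast
  obtain R where R: "recovering_set n C i R" "card R \<le> r"
    using loc i unfolding has_locality_def coord_locality_def by blast
  have Rsub: "R \<subseteq> {1..n} - {i}" using R unfolding recovering_set_def by auto
  have finR: "finite R" using Rsub by (meson finite_Diff finite_atLeastAtMost finite_subset)
  have finS: "finite S" using Sn by (meson finite_atLeastAtMost finite_subset)
  have finA: "finite A" using AS finS finite_subset by blast
  define A' where "A' = A \<union> (R - S)"
  define S' where "S' = insert i (S \<union> (R - S))"
  have cA': "card A' = card A + card (R - S)" unfolding A'_def
    using AS finA finR by (subst card_Un_disjoint) auto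
  have u: "card (S \<union> (R - S)) = card S + card (R - S)"
    using finS finR by (intro card_Un_disjoint) auto
  have cS': "card S' = card S + card (R - S) + 1" unfolding S'_def
    using i Rsub finS finR u by (subst card_insert_disjoint) auto
  have cRS: "card (R - S) \<le> r" using R(2) finR by (meson card_mono Diff_subset le_trans)
  have dR: "detm C R {i}" using rec_det[OF fin R(1)] .
  have "detm C A' S'" unfolding detm_def
  proof (intro ballI impI)
    fix c c' j assume c: "c \<in> C" "c' \<in> C" and ag: "\<forall>j\<in>A'. c j = c' j" and j: "j \<in> S'"
    have agS: "\<forall>j\<in>S. c j = c' j" using dt c ag unfolding detm_def A'_def by blast
    have agR: "\<forall>j\<in>R. c j = c' j" using agS ag unfolding A'_def by blast
    have "c i = c' i" using dR c agR unfolding detm_def by blast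
    then show "c j = c' j" using j agS agR unfolding S'_def by blast
  qed
  moreover have "A' \<subseteq> S'" "S' \<subseteq> {1..n}" using AS Sn i Rsub unfolding A'_def S'_def by auto
  ultimately have "inv2 n C A' S' (t+1)" unfolding inv2_def using cA' cS' cs by simp
  moreover have "card A' \<le> (t+1) * r" using cA' cr cRS by simp
  moreover have "card S < card S'" using cS' by simp
  ultimately show ?thesis by blast
qed

lemma reach_full:
  assumes "inv2 n C A S t" "card A \<le> t * r" "has_locality n C r" "finite C"
  shows "\<exists>A' S' t'. inv2 n C A' S' t' \<and> card A' \<le> t' * r \<and> S' = {1..n}"
  using assms
proof (induction "n - card S" arbitrary: A S t rule: less_induct)
  case less
  show ?case
  proof (cases "S = {1..n}")
    case True then show ?thesis using less.prems by blast
  next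
    case False
    obtain A' S' where *: "inv2 n C A' S' (t+1)" "card A' \<le> (t+1) * r" "card S < card S'"
      using step[OF less.prems(1,2) False less.prems(3,4)] by blast
    have "S \<subseteq> {1..n}" "S' \<subseteq> {1..n}"
      using less.prems(1) * unfolding inv2_def by auto
    moreover have "card S' \<le> n" using \<open>S' \<subseteq> {1..n}\<close> by (metis card_atLeastAtMost card_mono finite_atLeastAtMost diff_Suc_1)
    ultimately have "n - card S' < n - card S" using *(3) by linarith
    then show ?thesis using less.hyps * less.prems(3,4) by blast
  qed
qed

lemma reach_t:
  assumes "t * r < kappa n C" "has_locality n C r" "finite C" "C \<subseteq> words n"
  shows "\<exists>A S. inv2 n C A S t \<and> card A \<le> t * r"
  using assms
proof (induction t)
  case 0
  have "inv2 n C {} {} 0" unfolding inv2_def detm_def by auto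
  then show ?case by fastforce
next
  case (Suc t)
  have "t * r < kappa n C" using Suc.prems(1) by (meson le_add2 le_less_trans mult_le_mono1 Suc_n_not_le_n nat_le_linear)
  then obtain A S where AS: "inv2 n C A S t" "card A \<le> t * r" using Suc by blast
  have "card A < kappa n C" using AS(2) \<open>t * r < kappa n C\<close> by simp
  moreover have A: "A \<subseteq> {1..n}" using AS(1) unfolding inv2_def by auto
  ultimately obtain c c' where cc: "c \<in> C" "c' \<in> C" "c \<noteq> c'" "\<forall>j\<in>A. c j = c' j"
    using small_nondet Suc.prems(3) by blast
  have "S \<noteq> {1..n}"
  proof
    assume "S = {1..n}"
    hence "\<forall>j\<in>{1..n}. c j = c' j" using AS(1) cc unfolding inv2_def detm_def by blast
    then show False using words_eq cc Suc.prems(4) by blast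
  qed
  then show ?case using step[OF AS(1) AS(2) _ Suc.prems(2,3)] by auto
qed

lemma topup:
  assumes "inv2 n C A S t" "card A \<le> k" "k < kappa n C" "finite C" "C \<subseteq> words n"
  shows "\<exists>A' S'. inv2 n C A' S' t \<and> card A' = k"
  using assms
proof (induction "k - card A" arbitrary: A S rule: less_induct)
  case less
  show ?case
  proof (cases "card A = k")
    case True then show ?thesis using less.prems by blast
  next
    case False
    have A: "A \<subseteq> {1..n}" and AS: "A \<subseteq> S" and Sn: "S \<subseteq> {1..n}" and dt: "detm C A S"
      and cs: "card S = card A + t" using less.prems(1) unfolding inv2_def by auto
    obtain c c' where cc: "c \<in> C" "c' \<in> C" "c \<noteq> c'" "\<forall>j\<in>A. c j = c' j"
      using small_nondet[OF A, of C] less.prems by fastforce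
    have "S \<noteq> {1..n}"
    proof
      assume "S = {1..n}"
      hence "\<forall>j\<in>{1..n}. c j = c' j" using dt cc unfolding detm_def by blast
      then show False using words_eq cc less.prems(5) by blast
    qed
    then obtain x where x: "x \<in> {1..n}" "x \<notin> S" using Sn by blast
    have finS: "finite S" using Sn by (meson finite_atLeastAtMost finite_subset)
    have finA: "finite A" using AS finS finite_subset by blast
    have "x \<notin> A" using x AS by blast
    have inv': "inv2 n C (insert x A) (insert x S) t"
      unfolding inv2_def using AS Sn x finS finA \<open>x \<notin> A\<close> cs dt
      by (auto simp: detm_def)
    have c': "card (insert x A) = card A + 1" using finA \<open>x \<notin> A\<close> by simp
    have "card (insert x A) \<le> k" using c' False less.prems(2) by simp
    moreover have "k - card (insert x A) < k - card A" using c' False less.prems(2) by simp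
    ultimately show ?thesis using less.hyps inv' less.prems(3-5) by blast
  qed
qed

theorem mainTheorem2:
  fixes C :: "(nat \<Rightarrow> 'a::{comm_ring,finite}) set" and n r :: nat
  assumes "C \<subseteq> words n"
    and "card C \<ge> 2"
    and "r \<ge> 1"
    and "has_locality n C r"
  shows "int (min_dist n C) \<le> int n - int (kappa n C) - \<lceil>real (kappa n C) / real r\<rceil> + 2 \<and>
         real (kappa n C) / real n \<le> real r / (real r + 1)"
proof
  define k where "k = kappa n C"
  have fin: "finite C" using assms(1) words_finite finite_subset by blast
  have k1: "k \<ge> 1" using kappa_pos[OF assms(1,2)] k_def by simp
  define c where "c = \<lceil>real k / real r\<rceil>"
  have c1: "c \<ge> 1" unfolding c_def using k1 assms(3) by (simp add: le_ceiling_iff)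
  have "real_of_int c < real k / real r + 1" unfolding c_def by linarith
  hence "real_of_int (c - 1) * real r < real k" using assms(3) by (simp add: field_simps)
  define t where "t = nat (c - 1)"
  have "real (t * r) < real k" using \<open>real_of_int (c - 1) * real r < real k\<close> c1 unfolding t_def
    by (simp add: of_nat_mult)
  hence tr: "t * r < k" by linarith
  obtain A S where AS: "inv2 n C A S t" "card A \<le> t * r"
    using reach_t[OF tr[unfolded k_def] assms(4) fin assms(1)] by blast
  obtain A' S' where AS': "inv2 n C A' S' t" "card A' = k - 1"
    using topup[OF AS(1), of "k - 1"] AS(2) tr k1 fin assms(1) k_def by fastforce
  have A': "A' \<subseteq> {1..n}" and Sn: "S' \<subseteq> {1..n}" and dt: "detm C A' S'"
    and cs: "card S' = card A' + t" using AS'(1) unfolding inv2_def by auto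
  obtain x y where xy: "x \<in> C" "y \<in> C" "x \<noteq> y" "\<forall>j\<in>A'. x j = y j"
    using small_nondet[OF A', of C] AS'(2) k1 k_def fin by fastforce
  have agS: "\<forall>j\<in>S'. x j = y j" using dt xy unfolding detm_def by blast
  have "{i\<in>{1..n}. x i \<noteq> y i} \<subseteq> {1..n} - S'" using agS by auto
  hence "hamming n x y \<le> card ({1..n} - S')" unfolding hamming_def
    by (intro card_mono) auto
  also have "\<dots> = n - card S'" using Sn by (simp add: card_Diff_subset finite_subset)
  finally have h: "hamming n x y \<le> n - card S'" .
  have finH: "finite {hamming n x y | x y. x \<in> C \<and> y \<in> C \<and> x \<noteq> y}"
  proof -
    have "{hamming n x y | x y. x \<in> C \<and> y \<in> C \<and> x \<noteq> y} \<subseteq> (\<lambda>(x,y). hamming n x y) ` (C \<times> C)"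
      by auto
    then show ?thesis using fin finite_subset by blast
  qed
  have "min_dist n C \<le> hamming n x y" unfolding min_dist_def
    using finH xy by (intro Min_le) auto
  hence d: "min_dist n C \<le> n - card S'" using h by linarith
  have "card S' \<le> n" using Sn by (metis card_atLeastAtMost card_mono finite_atLeastAtMost diff_Suc_1)
  hence "int (min_dist n C) \<le> int n - int (card S')" using d by linarith
  moreover have "int (card S') = int k - 1 + (c - 1)" using cs AS'(2) k1 c1 unfolding t_def by simp
  ultimately show "int (min_dist n C) \<le> int n - int (kappa n C) - \<lceil>real (kappa n C) / real r\<rceil> + 2"
    unfolding k_def c_def by linarith
next
  have fin: "finite C" using assms(1) words_finite finite_subset by blast
  have "inv2 n C {} {} 0" unfolding inv2_def detm_def by auto
  then obtain A S t where AS: "inv2 n C A S t" "card A \<le> t * r" "S = {1..n}"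
    using reach_full[of n C "{}" "{}" 0 r] assms(4) fin by auto
  have A: "A \<subseteq> {1..n}" and dt: "detm C A {1..n}" and cs: "n = card A + t"
    using AS unfolding inv2_def by auto
  have kA: "kappa n C \<le> card A" using det_full_kappa[OF assms(1) A dt] .
  have k1: "kappa n C \<ge> 1" using kappa_pos[OF assms(1,2)] .
  have "kappa n C * (r + 1) \<le> n * r"
  proof -
    have "kappa n C * (r + 1) \<le> card A * (r + 1)" using kA by (rule mult_right_mono) simp
    also have "\<dots> = card A * r + card A" by simp
    also have "\<dots> \<le> card A * r + t * r" using AS(2) by simp
    also have "\<dots> = n * r" using cs by (simp add: algebra_simps)
    finally show ?thesis .
  qed
  hence r: "real (kappa n C) * (real r + 1) \<le> real n * real r"
    by (metis of_nat_1 of_nat_add of_nat_le_iff of_nat_mult)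
  have "n \<ge> 1" using cs kA k1 by linarith
  then show "real (kappa n C) / real n \<le> real r / (real r + 1)"
    using r by (simp add: divide_simps mult.commute)
qed

end
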